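(* Let $\Omega\subset\mathbb R^d$ be a connected bounded open set and $p\in(1,+\infty)$. Let $f\colon\mathbb R^2\to\mathbb R$ and $g\colon\mathbb R\to\mathbb R$ be continuous, and let $\mu$, $\nu$ be positive bounded Radon measures on $\Omega\times\Omega$ and $\Omega$ respectively. Suppose that $$\int_\Omega|u(x)-m_p(u)|^p\,dx=\int_{\Omega\times\Omega}f(u(x),u(y))\,d\mu(x,y)+\int_\Omega g(u(x))\,d\nu(x)$$ for every $u\in C^\infty_c(\Omega)$. Then the same equality holds for $u=1_A$ for every open set $A\subset\Omega$, i.e. $$\int_\Omega|1_A(x)-m_p(1_A)|^p\,dx=\int_{\Omega\times\Omega}f(1_A(x),1_A(y))\,d\mu(x,y)+\int_\Omega g(1_A(x))\,d\nu(x).$$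
   Context: For $u\in L^p(\Omega)$, $m_p(u)$ is the unique minimum point of $t\mapsto\int_\Omega|u(x)-t|^p\,dx$. $1_A$ denotes the characteristic function of $A$. *)

theory Defs
  imports "HOL-Analysis.Analysis"
begin

coinductive smooth_fun :: "('a::euclidean_space \<Rightarrow> real) \<Rightarrow> bool" where
  "u differentiable_on UNIV \<Longrightarrow>
   (\<forall>b\<in>Basis. smooth_fun (\<lambda>x. frechet_derivative u (at x) b)) \<Longrightarrow> smooth_fun u"

text \<open>C-infinity functions with compact support inside Omega (extended by zero outside).\<close>
definition Cc_inf :: "'a::euclidean_space set \<Rightarrow> ('a \<Rightarrow> real) set" where
  "Cc_inf \<Omega> = {u. smooth_fun u \<and> compact (closure {x. u x \<noteq> 0})
                   \<and> closure {x. u x \<noteq> 0} \<subseteq> \<Omega>}"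

definition m_p :: "real \<Rightarrow> 'a::euclidean_space set \<Rightarrow> ('a \<Rightarrow> real) \<Rightarrow> real" where
  "m_p p \<Omega> u = (THE t. \<forall>s. (LINT x:\<Omega>|lebesgue. \<bar>u x - t\<bar> powr p)
                              \<le> (LINT x:\<Omega>|lebesgue. \<bar>u x - s\<bar> powr p))"

end

theory Submission imports Defs "HOL-Computational_Algebra.Polynomial" begin
definition FF :: "real poly \<Rightarrow> real \<Rightarrow> real" where
  "FF P t = (if t > 0 then poly P (1/t) * exp (-1/t) else 0)"

lemma poly_exp_top: fixes P :: "real poly" shows "((\<lambda>s. poly P s / exp s) \<longlongrightarrow> 0) at_top"
proof -
  have "((\<lambda>s. \<Sum>i\<le>degree P. coeff P i * (s ^ i / exp s)) \<longlongrightarrow> (\<Sum>i\<le>degree P. coeff P i * 0)) at_top"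
    by (intro tendsto_sum tendsto_mult tendsto_const) (auto intro: tendsto_power_div_exp_0)
  moreover have "(\<lambda>s. \<Sum>i\<le>degree P. coeff P i * (s ^ i / exp s)) = (\<lambda>s. poly P s / exp s)"
    by (auto simp: poly_altdef sum_divide_distrib)
  ultimately show ?thesis by simp
qed

lemma FF_tendsto0: "(FF P \<longlongrightarrow> 0) (at 0)"
proof (rule filterlim_split_at)
  show "(FF P \<longlongrightarrow> 0) (at_left 0)"
    by (rule tendsto_eventually) (auto simp: FF_def eventually_at_left_field intro: exI[of _ "-1"])
  have "(((\<lambda>s. poly P s / exp s) \<circ> inverse) \<longlongrightarrow> 0) (at_right 0)"
    unfolding comp_def by (rule filterlim_compose[OF poly_exp_top filterlim_inverse_at_top_right])
  moreover have e: "eventually (\<lambda>t. ((\<lambda>s. poly P s / exp s) \<circ> inverse) t = FF P t) (at_right 0)"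
    by (auto simp: FF_def eventually_at_right_field exp_minus field_simps intro!: exI[of _ 1])
  ultimately show "(FF P \<longlongrightarrow> 0) (at_right 0)"
    using tendsto_cong[OF e] by blast
qed

definition QQ :: "real poly \<Rightarrow> real poly" where
  "QQ P = [:0,0,1:] * (P - pderiv P)"

lemma FF_deriv: "(FF P has_real_derivative FF (QQ P) t) (at t)"
proof -
  consider "t > 0" | "t < 0" | "t = 0" by linarith
  then show ?thesis
  proof cases
    case 1
    have d: "((\<lambda>t. poly P (1/t) * exp (-1/t)) has_real_derivative FF (QQ P) t) (at t)"
    proof -
      have "((\<lambda>t. poly P (1/t) * exp (-1/t)) has_real_derivative
        (poly (pderiv P) (1/t) * (- 1/t^2)) * exp (-1/t) + poly P (1/t) * (exp (-1/t) * (1/t^2))) (at t)"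
        using 1
        by (auto intro!: derivative_eq_intros DERIV_chain2[OF poly_DERIV]
            simp: power2_eq_square field_simps)
      moreover have "(poly (pderiv P) (1/t) * (- 1/t^2)) * exp (-1/t) + poly P (1/t) * (exp (-1/t) * (1/t^2))
          = FF (QQ P) t"
        using 1 by (simp add: FF_def QQ_def algebra_simps power2_eq_square divide_simps)
      ultimately show ?thesis by simp
    qed
    show ?thesis
      by (rule has_field_derivative_transform_within_open[OF d, of "{0<..}"])
        (use 1 in \<open>auto simp: FF_def\<close>)
  next
    case 2
    have "((\<lambda>t. 0) has_real_derivative FF (QQ P) t) (at t)"
      using 2 by (simp add: FF_def)
    then show ?thesis
      by (rule has_field_derivative_transform_within_open[of _ _ _ "{..<0}"])
        (use 2 in \<open>auto simp: FF_def\<close>)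
  next
    case 3
    have "((\<lambda>x. (FF P x - FF P 0) / (x - 0)) \<longlongrightarrow> 0) (at 0)"
    proof -
      have e: "eventually (\<lambda>x. FF (pCons 0 P) x = (FF P x - FF P 0) / (x - 0)) (at 0)"
        by (auto simp: eventually_at_filter FF_def)
      show ?thesis by (rule tendsto_cong[OF e, THEN iffD1, OF FF_tendsto0])
    qed
    moreover have "FF (QQ P) 0 = 0" by (simp add: FF_def)
    ultimately show ?thesis using 3 by (simp add: has_field_derivative_iff)
  qed
qed

definition rs :: "(real \<Rightarrow> real) \<Rightarrow> bool" where
  "rs h \<longleftrightarrow> (\<forall>n x. ((deriv ^^ n) h) differentiable (at x))"

lemma rs_deriv: "rs h \<Longrightarrow> rs (deriv h)"
  unfolding rs_def
proof (intro allI)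
  fix n x assume "\<forall>n x. (deriv ^^ n) h differentiable at x"
  then have "(deriv ^^ Suc n) h differentiable at x" by blast
  then show "(deriv ^^ n) (deriv h) differentiable at x" by (simp only: funpow_Suc_right o_apply)
qed

lemma FF_iter: "(deriv ^^ n) (FF P) = FF ((QQ ^^ n) P)"
proof (induction n)
  case (Suc n)
  have "(deriv ^^ Suc n) (FF P) = deriv (FF ((QQ ^^ n) P))" by (simp add: Suc)
  also have "\<dots> = FF ((QQ ^^ Suc n) P)" using DERIV_imp_deriv[OF FF_deriv] by (auto simp: fun_eq_iff)
  finally show ?case .
qed simp

lemma rs_FF: "rs (FF P)"
  unfolding rs_def FF_iter using FF_deriv real_differentiable_def by blast


inductive SS :: "('a::euclidean_space \<Rightarrow> real) \<Rightarrow> bool" where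
  SS_const: "SS (\<lambda>x. c)"
| SS_lin: "SS (\<lambda>x. inner x v)"
| SS_sq: "SS (\<lambda>x. inner x x)"
| SS_add: "SS u \<Longrightarrow> SS w \<Longrightarrow> SS (\<lambda>x. u x + w x)"
| SS_mult: "SS u \<Longrightarrow> SS w \<Longrightarrow> SS (\<lambda>x. u x * w x)"
| SS_comp: "rs h \<Longrightarrow> SS u \<Longrightarrow> SS (\<lambda>x. h (u x))"

lemma SS_deriv: "SS u \<Longrightarrow> \<exists>D. (\<forall>x. (u has_derivative D x) (at x)) \<and> (\<forall>v. SS (\<lambda>x. D x v))"
proof (induction rule: SS.induct)
  case (SS_const c)
  show ?case by (rule exI[of _ "\<lambda>x h. 0"]) (auto intro: SS.SS_const)
next
  case (SS_lin v)
  show ?case by (rule exI[of _ "\<lambda>x h. inner h v"]) (auto intro!: SS.SS_const derivative_eq_intros)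
next
  case SS_sq
  show ?case
  proof (rule exI[of _ "\<lambda>x h. inner h x + inner x h"], intro conjI allI)
    fix x :: 'a show "((\<lambda>x. inner x x) has_derivative (\<lambda>h. inner h x + inner x h)) (at x)"
      by (auto intro!: derivative_eq_intros)
  next
    fix v :: 'a
    have "SS (\<lambda>x. inner x v + inner x v)" by (intro SS.SS_add SS.SS_lin)
    then show "SS (\<lambda>x. inner v x + inner x v)" by (simp add: inner_commute)
  qed
next
  case (SS_add u w)
  then obtain Du Dw where u: "\<forall>x. (u has_derivative Du x) (at x)" "\<forall>v. SS (\<lambda>x. Du x v)"
    and w: "\<forall>x. (w has_derivative Dw x) (at x)" "\<forall>v. SS (\<lambda>x. Dw x v)" by blast
  show ?case
    by (rule exI[of _ "\<lambda>x h. Du x h + Dw x h"]) (use u w in \<open>auto intro!: SS.SS_add has_derivative_add\<close>)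
next
  case (SS_mult u w)
  then obtain Du Dw where u: "\<forall>x. (u has_derivative Du x) (at x)" "\<forall>v. SS (\<lambda>x. Du x v)"
    and w: "\<forall>x. (w has_derivative Dw x) (at x)" "\<forall>v. SS (\<lambda>x. Dw x v)" by blast
  show ?case
    by (rule exI[of _ "\<lambda>x h. u x * Dw x h + Du x h * w x"])
      (use u w SS_mult.hyps in \<open>auto intro!: SS.SS_add SS.SS_mult has_derivative_mult\<close>)
next
  case (SS_comp h u)
  then obtain Du where u: "\<forall>x. (u has_derivative Du x) (at x)" "\<forall>v. SS (\<lambda>x. Du x v)" by blast
  have hd: "(h has_real_derivative deriv h y) (at y)" for y
    using SS_comp.hyps(1) unfolding rs_def
    by (metis DERIV_deriv_iff_real_differentiable funpow_0)
  show ?case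
  proof (rule exI[of _ "\<lambda>x k. Du x k * deriv h (u x)"], intro conjI allI)
    fix x show "((\<lambda>x. h (u x)) has_derivative (\<lambda>k. Du x k * deriv h (u x))) (at x)"
      by (rule DERIV_compose_FDERIV[OF hd u(1)[rule_format]])
  next
    fix v show "SS (\<lambda>x. Du x v * deriv h (u x))"
      by (rule SS.SS_mult[OF u(2)[rule_format] SS.SS_comp[OF rs_deriv[OF SS_comp.hyps(1)] SS_comp.hyps(2)]])
  qed
qed

lemma SS_smooth: assumes "SS u" shows "smooth_fun u"
  using assms
proof (coinduction arbitrary: u)
  case (smooth_fun u)
  from SS_deriv[OF this] obtain D where D: "\<forall>x. (u has_derivative D x) (at x)" "\<forall>v. SS (\<lambda>x. D x v)"
    by blast
  have fe: "frechet_derivative u (at x) = D x" for x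
    using frechet_derivative_at D(1) by metis
  show ?case
    using D by (auto simp: fe differentiable_on_def differentiable_def)
qed

lemma SS_cont: assumes "SS u" shows "continuous_on UNIV u"
proof -
  obtain D where "\<forall>x. (u has_derivative D x) (at x)" using SS_deriv[OF assms] by blast
  then show ?thesis by (intro continuous_at_imp_continuous_on ballI) (auto intro: has_derivative_continuous)
qed

lemma SS_diff: "SS u \<Longrightarrow> SS w \<Longrightarrow> SS (\<lambda>x. u x - w x)"
proof -
  assume "SS u" "SS w"
  have "SS (\<lambda>x. u x + c * w x)" for c
    using SS.SS_add[OF \<open>SS u\<close> SS.SS_mult[OF SS.SS_const \<open>SS w\<close>]] .
  from this[of "-1"] show ?thesis by simp
qed

lemma SS_power: assumes "SS u" shows "SS (\<lambda>x. u x ^ n)"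
proof (induction n)
  case 0 show ?case using SS.SS_const[of 1] by simp
next
  case (Suc n)
  have "SS (\<lambda>x. u x * u x ^ n)" by (rule SS.SS_mult[OF assms Suc])
  then show ?case by simp
qed

lemma SS_prod: "finite I \<Longrightarrow> (\<And>i. i \<in> I \<Longrightarrow> SS (f i)) \<Longrightarrow> SS (\<lambda>x. \<Prod>i\<in>I. f i x)"
proof (induction I rule: finite_induct)
  case empty show ?case using SS.SS_const[of 1] by simp
next
  case (insert i I)
  have "SS (\<lambda>x. f i x * (\<Prod>i\<in>I. f i x))"
    by (rule SS.SS_mult) (use insert in auto)
  then show ?case using insert by simp
qed

definition bump :: "'a::euclidean_space \<Rightarrow> real \<Rightarrow> 'a \<Rightarrow> real" where
  "bump c r x = FF 1 (r^2 - norm (x - c)^2)"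

lemma SS_bump: "SS (bump c r)"
proof -
  have "SS (\<lambda>x. FF 1 (r^2 - (inner x x - 2 * inner x c + inner c c)))"
    by (rule SS.SS_comp[OF rs_FF], intro SS_diff SS.SS_add SS.SS_const SS.SS_sq SS.SS_mult SS.SS_lin)
  moreover have "norm (x - c)^2 = inner x x - 2 * inner x c + inner c c" for x
    unfolding power2_norm_eq_inner inner_diff_left inner_diff_right inner_commute[of c x] by simp
  ultimately show ?thesis unfolding bump_def by (simp add: fun_eq_iff)
qed

lemma bump_pos: "0 < bump c r x \<longleftrightarrow> x \<in> ball c r" if "r > 0"
proof -
  have "0 < bump c r x \<longleftrightarrow> norm (x - c)^2 < r^2" by (simp add: bump_def FF_def)
  also have "\<dots> \<longleftrightarrow> norm (x - c) < r" using that by (metis abs_le_square_iff abs_of_pos abs_norm_cancel not_le)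
  finally show ?thesis by (simp add: dist_norm norm_minus_commute)
qed

lemma bump_ge0: "0 \<le> bump c r x"
  by (simp add: bump_def FF_def)

lemma bump_le1: "bump c r x \<le> 1"
proof -
  have "exp (- 1 / t) \<le> 1" if "t > 0" for t :: real
    using that by simp
  then show ?thesis by (simp add: bump_def FF_def)
qed

lemma ball_cover:
  fixes A :: "'a::euclidean_space set"
  assumes "open A" "A \<noteq> {}"
  obtains c :: "nat \<Rightarrow> 'a" and r :: "nat \<Rightarrow> real"
  where "\<And>i. r i > 0" "\<And>i. cball (c i) (r i) \<subseteq> A" "(\<Union>i. ball (c i) (r i)) = A"
proof -
  define F where "F = {ball c r | c r. r > 0 \<and> cball c r \<subseteq> A}"
  have "\<And>S. S \<in> F \<Longrightarrow> open S" by (auto simp: F_def)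
  then obtain F' where F': "F' \<subseteq> F" "countable F'" "\<Union>F' = \<Union>F" by (rule Lindelof)
  have UF: "\<Union>F = A"
  proof
    show "\<Union>F \<subseteq> A" by (auto simp: F_def)
    show "A \<subseteq> \<Union>F"
    proof
      fix x assume "x \<in> A"
      then obtain e where "e > 0" "ball x e \<subseteq> A" using assms(1) open_contains_ball by blast
      then have "cball x (e/2) \<subseteq> A" "e/2 > 0" by auto
      then have "ball x (e/2) \<in> F" unfolding F_def by blast
      moreover have "x \<in> ball x (e/2)" using \<open>e > 0\<close> by simp
      ultimately show "x \<in> \<Union>F" by blast
    qed
  qed
  have "F' \<noteq> {}" using F'(3) UF assms(2) by auto
  define B where "B = from_nat_into F'"
  have rB: "range B = F'" unfolding B_def using range_from_nat_into[OF \<open>F' \<noteq> {}\<close> F'(2)] .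
  have "\<forall>i. \<exists>cr. B i = ball (fst cr) (snd cr) \<and> snd cr > 0 \<and> cball (fst cr) (snd cr) \<subseteq> A"
  proof
    fix i have "B i \<in> F" using rB F'(1) by auto
    then show "\<exists>cr. B i = ball (fst cr) (snd cr) \<and> snd cr > 0 \<and> cball (fst cr) (snd cr) \<subseteq> A"
      unfolding F_def by force
  qed
  from choice[OF this] obtain cr where cr0: "\<forall>i. B i = ball (fst (cr i)) (snd (cr i)) \<and> snd (cr i) > 0 \<and> cball (fst (cr i)) (snd (cr i)) \<subseteq> A"
    by blast
  then have cr: "\<And>i. B i = ball (fst (cr i)) (snd (cr i)) \<and> snd (cr i) > 0 \<and> cball (fst (cr i)) (snd (cr i)) \<subseteq> A"
    by blast
  show ?thesis
  proof
    show "\<And>i. snd (cr i) > 0" "\<And>i. cball (fst (cr i)) (snd (cr i)) \<subseteq> A" using cr by auto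
    have "(\<Union>i. ball (fst (cr i)) (snd (cr i))) = \<Union>(range B)" using cr by auto
    then show "(\<Union>i. ball (fst (cr i)) (snd (cr i))) = A" using rB F'(3) UF by simp
  qed
qed

lemma approx_indicator:
  fixes A \<Omega> :: "'a::euclidean_space set"
  assumes "open A" "A \<subseteq> \<Omega>"
  obtains un :: "nat \<Rightarrow> 'a \<Rightarrow> real"
  where "\<And>n. un n \<in> Cc_inf \<Omega>" "\<And>n. continuous_on UNIV (un n)"
    "\<And>n x. 0 \<le> un n x" "\<And>n x. un n x \<le> 1" "\<And>x. (\<lambda>n. un n x) \<longlonglongrightarrow> indicator A x"
proof (cases "A = {}")
  case True
  have "SS (\<lambda>x::'a. 0)" by (rule SS.SS_const)
  then have "(\<lambda>x::'a. 0) \<in> Cc_inf \<Omega>" unfolding Cc_inf_def using SS_smooth by simp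
  show ?thesis
  proof (rule that[of "\<lambda>n x. 0"])
    show "(\<lambda>x::'a. 0) \<in> Cc_inf \<Omega>" for n by fact
    show "continuous_on UNIV (\<lambda>x::'a. 0::real)" for n by (rule continuous_on_const)
    show "(\<lambda>n. 0::real) \<longlonglongrightarrow> indicator A x" for x using True by simp
  qed simp_all
next
  case False
  have "\<exists>(c :: nat \<Rightarrow> 'a) (r :: nat \<Rightarrow> real). (\<forall>i. r i > 0) \<and> (\<forall>i. cball (c i) (r i) \<subseteq> A) \<and> (\<Union>i. ball (c i) (r i)) = A"
    by (rule ball_cover[OF assms(1) False]) (rule exI, rule exI, intro conjI allI, assumption+)
  then obtain c :: "nat \<Rightarrow> 'a" and r :: "nat \<Rightarrow> real"
    where r0: "\<forall>i. r i > 0" "\<forall>i. cball (c i) (r i) \<subseteq> A" "(\<Union>i. ball (c i) (r i)) = A"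
    by blast
  have r: "\<And>i. r i > 0" "\<And>i. cball (c i) (r i) \<subseteq> A" "(\<Union>i. ball (c i) (r i)) = A"
    using r0 by auto
  define b where "b i x = bump (c i) (r i) x" for i x
  define un where "un n x = 1 - (\<Prod>i<n. 1 - b i x) ^ n" for n x
  have b01: "0 \<le> b i x" "b i x \<le> 1" for i x by (auto simp: b_def bump_ge0 bump_le1)
  have bpos: "0 < b i x \<longleftrightarrow> x \<in> ball (c i) (r i)" for i x using bump_pos[OF r(1)] by (simp add: b_def)
  have SSun: "SS (un n)" for n
  proof -
    have "SS (\<lambda>x. \<Prod>i<n. 1 - b i x)"
      by (rule SS_prod) (auto simp: b_def intro!: SS_diff SS.SS_const SS_bump)
    then have "SS (\<lambda>x. 1 - (\<Prod>i<n. 1 - b i x) ^ n)"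
      by (intro SS_diff SS.SS_const SS_power)
    then show ?thesis by (simp add: un_def[abs_def])
  qed
  have P01: "0 \<le> (\<Prod>i<n. 1 - b i x)" "(\<Prod>i<n. 1 - b i x) \<le> 1" for n x
    using b01 by (auto intro!: prod_nonneg prod_le_1)
  have un01: "0 \<le> un n x" "un n x \<le> 1" for n x
    using P01[where n=n and x=x] by (auto simp: un_def power_le_one)
  have supp: "{x. un n x \<noteq> 0} \<subseteq> (\<Union>i<n. ball (c i) (r i))" for n
  proof
    fix x assume "x \<in> {x. un n x \<noteq> 0}"
    then have "un n x \<noteq> 0" by simp
    show "x \<in> (\<Union>i<n. ball (c i) (r i))"
    proof (rule ccontr)
      assume "x \<notin> (\<Union>i<n. ball (c i) (r i))"
      then have "b i x = 0" if "i < n" for i using bpos[of i x] b01[of i x] that by auto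
      then have "un n x = 0" by (simp add: un_def)
      with \<open>un n x \<noteq> 0\<close> show False by simp
    qed
  qed
  have Cc: "un n \<in> Cc_inf \<Omega>" for n
  proof -
    have cl: "closure {x. un n x \<noteq> 0} \<subseteq> (\<Union>i<n. cball (c i) (r i))"
    proof (rule closure_minimal)
      have "(\<Union>i<n. ball (c i) (r i)) \<subseteq> (\<Union>i<n. cball (c i) (r i))"
        by (rule UN_mono) auto
      then show "{x. un n x \<noteq> 0} \<subseteq> (\<Union>i<n. cball (c i) (r i))" using supp[of n] by (rule subset_trans[rotated])
      show "closed (\<Union>i<n. cball (c i) (r i))" by (rule closed_UN) auto
    qed
    have bd: "bounded {x. un n x \<noteq> 0}"
      by (rule bounded_subset[OF _ supp]) auto
    show ?thesis unfolding Cc_inf_def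
      using SS_smooth[OF SSun] compact_closure[THEN iffD2, OF bd] cl r(2) assms(2) by blast
  qed
  have lim: "(\<lambda>n. un n x) \<longlonglongrightarrow> indicator A x" for x
  proof (cases "x \<in> A")
    case False
    then have "b i x = 0" for i using bpos[of i x] b01[of i x] r(3) by auto
    then have "un n x = 0" for n by (simp add: un_def)
    then show ?thesis using False by simp
  next
    case True
    then obtain k where k: "x \<in> ball (c k) (r k)" using r(3) by blast
    define q where "q = b k x"
    have q: "0 < q" "q \<le> 1" using bpos[of k x] k b01[of k x] by (auto simp: q_def)
    have "(\<lambda>n. (1 - q) ^ n) \<longlonglongrightarrow> 0" using q by (intro LIMSEQ_power_zero) auto
    then have l1: "(\<lambda>n. 1 - (1 - q) ^ n) \<longlonglongrightarrow> 1" using tendsto_diff[OF tendsto_const] by fastforce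
    have ev: "eventually (\<lambda>n. 1 - (1 - q) ^ n \<le> un n x) sequentially"
    proof (rule eventually_sequentiallyI[of "Suc k"])
      fix n assume "Suc k \<le> n"
      then have kn: "k \<in> {..<n}" by auto
      have "(\<Prod>i<n. 1 - b i x) = (1 - b k x) * (\<Prod>i\<in>{..<n} - {k}. 1 - b i x)"
        using prod.remove[OF _ kn] by simp
      also have "\<dots> \<le> (1 - q) * 1"
        using b01 q unfolding q_def
        by (intro mult_mono prod_le_1) (auto intro: prod_nonneg)
      finally have "(\<Prod>i<n. 1 - b i x) \<le> 1 - q" by simp
      then have "(\<Prod>i<n. 1 - b i x) ^ n \<le> (1 - q) ^ n" using P01 by (intro power_mono) auto
      then show "1 - (1 - q) ^ n \<le> un n x" by (simp add: un_def)
    qed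
    have "(\<lambda>n. un n x) \<longlonglongrightarrow> 1"
      by (rule tendsto_sandwich[OF ev _ l1 tendsto_const]) (use un01 in auto)
    then show ?thesis using True by simp
  qed
  show ?thesis
    by (rule that[of un]) (use Cc SS_cont[OF SSun] un01 lim in auto)
qed

lemma powr_mvt:
  fixes a b p :: real
  assumes "0 \<le> a" "a < b" "0 < p"
  shows "\<exists>z. a < z \<and> z < b \<and> b powr p - a powr p = (b - a) * (p * z powr (p - 1))"
proof -
  have "continuous_on {a..b} (\<lambda>x. x powr p)"
    using assms by (intro continuous_on_powr' continuous_on_id continuous_on_const) auto
  moreover have "(\<lambda>x. x powr p) differentiable (at x)" if "a < x" for x
    using has_real_derivative_powr[of x p] that assms real_differentiable_def by fastforce
  ultimately obtain l z where lz: "a < z" "z < b" "((\<lambda>x. x powr p) has_real_derivative l) (at z)"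
    "b powr p - a powr p = (b - a) * l"
    using MVT[OF assms(2)] by blast
  have "l = p * z powr (p - 1)"
    using DERIV_unique[OF lz(3) has_real_derivative_powr[of z p]] lz(1) assms(1) by simp
  then show ?thesis using lz by blast
qed

lemma powr_lip01:
  fixes a b p :: real
  assumes "0 \<le> a" "a \<le> 1" "0 \<le> b" "b \<le> 1" "1 \<le> p"
  shows "\<bar>a powr p - b powr p\<bar> \<le> p * \<bar>a - b\<bar>"
proof -
  have *: "y powr p - x powr p \<le> p * (y - x)" if xy: "0 \<le> x" "x < y" "y \<le> 1" for x y :: real
  proof -
    obtain z where z: "x < z" "z < y" "y powr p - x powr p = (y - x) * (p * z powr (p - 1))"
      using powr_mvt[OF xy(1,2), of p] assms(5) by auto
    have "z powr (p - 1) \<le> 1 powr (p - 1)"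
      using z xy assms(5) by (intro powr_mono2) auto
    then have "z powr (p - 1) \<le> 1" by simp
    then have "(y - x) * (p * z powr (p - 1)) \<le> (y - x) * (p * 1)"
      using xy assms(5) by (intro mult_left_mono) auto
    then show ?thesis using z by simp
  qed
  consider "a < b" | "a = b" | "b < a" by linarith
  then show ?thesis
  proof cases
    case 1
    have "a powr p \<le> b powr p" using 1 assms by (intro powr_mono2) auto
    then show ?thesis using *[OF assms(1) 1 assms(4)] 1 by simp
  next
    case 3
    have "b powr p \<le> a powr p" using 3 assms by (intro powr_mono2) auto
    then show ?thesis using *[OF assms(3) 3 assms(2)] 3 by simp
  qed simp
qed

lemma powr_strict_mid:
  fixes x y p :: real
  assumes "x \<noteq> y" "1 < p"
  shows "\<bar>(x + y) / 2\<bar> powr p < (\<bar>x\<bar> powr p + \<bar>y\<bar> powr p) / 2"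
proof -
  have key: "((a + b) / 2) powr p < (a powr p + b powr p) / 2" if ab: "0 \<le> a" "a < b" for a b :: real
  proof -
    define m where "m = (a + b) / 2"
    have am: "a < m" "m < b" using ab by (auto simp: m_def)
    obtain z1 where z1: "a < z1" "z1 < m" "m powr p - a powr p = (m - a) * (p * z1 powr (p - 1))"
      using powr_mvt[OF ab(1) am(1), of p] assms(2) by auto
    obtain z2 where z2: "m < z2" "z2 < b" "b powr p - m powr p = (b - m) * (p * z2 powr (p - 1))"
      using powr_mvt[of m b p] am ab assms(2) by auto
    have "z1 powr (p - 1) < z2 powr (p - 1)"
      using z1 z2 ab assms(2) by (intro powr_less_mono2) auto
    then have "p * z1 powr (p - 1) < p * z2 powr (p - 1)" using assms(2) by simp
    moreover have "m - a = b - m" "0 < b - m" using ab by (auto simp: m_def field_simps)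
    ultimately have "(m - a) * (p * z1 powr (p - 1)) < (b - m) * (p * z2 powr (p - 1))"
      by (metis mult_strict_left_mono)
    then show ?thesis using z1 z2 by (simp add: m_def[symmetric])
  qed
  consider "\<bar>x\<bar> = \<bar>y\<bar>" | "\<bar>x\<bar> < \<bar>y\<bar>" | "\<bar>y\<bar> < \<bar>x\<bar>" by linarith
  then show ?thesis
  proof cases
    case 1
    then have "y = - x" "x \<noteq> 0" using assms(1) by (auto simp: abs_eq_iff)
    then show ?thesis using 1 by simp
  next
    case 2
    have "\<bar>(x + y) / 2\<bar> powr p \<le> ((\<bar>x\<bar> + \<bar>y\<bar>) / 2) powr p"
      using assms(2) by (intro powr_mono2) auto
    also have "\<dots> < (\<bar>x\<bar> powr p + \<bar>y\<bar> powr p) / 2" using key[OF _ 2] by simp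
    finally show ?thesis .
  next
    case 3
    have "\<bar>(x + y) / 2\<bar> powr p \<le> ((\<bar>y\<bar> + \<bar>x\<bar>) / 2) powr p"
      using assms(2) by (intro powr_mono2) auto
    also have "\<dots> < (\<bar>y\<bar> powr p + \<bar>x\<bar> powr p) / 2" using key[OF _ 3] by simp
    finally show ?thesis by simp
  qed
qed

lemma set_integrable_bdd:
  fixes f :: "'a::euclidean_space \<Rightarrow> real"
  assumes "\<Omega> \<in> lmeasurable" "f \<in> borel_measurable lebesgue" "\<And>x. \<bar>f x\<bar> \<le> B"
  shows "set_integrable lebesgue \<Omega> f"
  unfolding set_integrable_def
proof (rule Bochner_Integration.integrable_bound)
  have "integrable lebesgue (indicator \<Omega> :: 'a \<Rightarrow> real)"
    using assms(1) fmeasurableD fmeasurableD2[OF assms(1)] by (intro integrable_real_indicator) (auto simp: top.not_eq_extremum)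
  then show "integrable lebesgue (\<lambda>x. indicator \<Omega> x *\<^sub>R B)" by (rule integrable_scaleR_left)
  show "(\<lambda>x. indicator \<Omega> x *\<^sub>R f x) \<in> borel_measurable lebesgue"
    using assms(1,2) fmeasurableD by measurable
  show "AE x in lebesgue. norm (indicator \<Omega> x *\<^sub>R f x) \<le> norm (indicator \<Omega> x *\<^sub>R B)"
    using assms(3) by (intro AE_I2) (auto simp: indicator_def intro: order_trans[OF _ abs_ge_self])
qed

lemma set_integral_pos:
  fixes h :: "'a::euclidean_space \<Rightarrow> real"
  assumes "\<Omega> \<in> sets lebesgue" "0 < measure lebesgue \<Omega>" "set_integrable lebesgue \<Omega> h"
    "\<And>x. x \<in> \<Omega> \<Longrightarrow> 0 < h x"
  shows "0 < (LINT x:\<Omega>|lebesgue. h x)"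
proof -
  have int: "integrable lebesgue (\<lambda>x. indicator \<Omega> x * h x)"
    using assms(3) by (simp add: set_integrable_def)
  have nn: "AE x in lebesgue. 0 \<le> indicator \<Omega> x * h x"
    using assms(4) by (intro AE_I2) (auto simp: indicator_def less_imp_le)
  have ge: "0 \<le> (LINT x:\<Omega>|lebesgue. h x)"
    unfolding set_lebesgue_integral_def using nn int by (simp add: integral_nonneg_AE)
  have "(LINT x:\<Omega>|lebesgue. h x) \<noteq> 0"
  proof
    assume "(LINT x:\<Omega>|lebesgue. h x) = 0"
    then have "AE x in lebesgue. indicator \<Omega> x * h x = 0"
      using integral_nonneg_eq_0_iff_AE[OF int nn] by (simp add: set_lebesgue_integral_def)
    then have "AE x in lebesgue. x \<notin> \<Omega>"
      by eventually_elim (auto simp: indicator_def dest: assms(4))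
    then have "emeasure lebesgue \<Omega> = 0"
      using AE_iff_measurable[OF assms(1), of "\<lambda>x. x \<notin> \<Omega>"] by simp
    then show False using assms(2) by (simp add: measure_def)
  qed
  then show ?thesis using ge by simp
qed

lemma mp_prop:
  fixes \<Omega> :: "'a::euclidean_space set" and u :: "'a \<Rightarrow> real" and p :: real
  assumes \<Omega>m: "\<Omega> \<in> lmeasurable" and \<Omega>pos: "0 < measure lebesgue \<Omega>" and p: "1 < p"
    and um: "u \<in> borel_measurable lebesgue" and u0: "\<And>x. 0 \<le> u x" and u1: "\<And>x. u x \<le> 1"
  shows "m_p p \<Omega> u \<in> {0..1}"
    "\<And>s. (LINT x:\<Omega>|lebesgue. \<bar>u x - m_p p \<Omega> u\<bar> powr p) \<le> (LINT x:\<Omega>|lebesgue. \<bar>u x - s\<bar> powr p)"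
proof -
  define G where "G t = (LINT x:\<Omega>|lebesgue. \<bar>u x - t\<bar> powr p)" for t
  have \<Omega>s: "\<Omega> \<in> sets lebesgue" using \<Omega>m by auto
  have \<Omega>f: "emeasure lebesgue \<Omega> \<noteq> \<infinity>" unfolding infinity_ennreal_def by (rule fmeasurableD2[OF \<Omega>m])
  have int: "set_integrable lebesgue \<Omega> (\<lambda>x. \<bar>u x - t\<bar> powr p)" for t
  proof (rule set_integrable_bdd[OF \<Omega>m])
    show "(\<lambda>x. \<bar>u x - t\<bar> powr p) \<in> borel_measurable lebesgue" using um by measurable
    fix x
    have "\<bar>u x - t\<bar> powr p \<le> (1 + \<bar>t\<bar>) powr p"
      using u0[of x] u1[of x] p by (intro powr_mono2) auto
    then show "\<bar>\<bar>u x - t\<bar> powr p\<bar> \<le> (1 + \<bar>t\<bar>) powr p" by simp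
  qed
  have intc: "set_integrable lebesgue \<Omega> (\<lambda>x. c :: real)" for c
    by (rule set_integrable_bdd[OF \<Omega>m, of _ "\<bar>c\<bar>"]) auto
  have lip1: "G t \<le> G s + measure lebesgue \<Omega> * (p * \<bar>t - s\<bar>)" if "t \<in> {0..1}" "s \<in> {0..1}" for t s
  proof -
    have "G t \<le> (LINT x:\<Omega>|lebesgue. \<bar>u x - s\<bar> powr p + p * \<bar>t - s\<bar>)"
      unfolding G_def
    proof (rule set_integral_mono[OF int set_integral_add(1)[OF int intc]])
      fix x
      have "\<bar>\<bar>u x - t\<bar> powr p - \<bar>u x - s\<bar> powr p\<bar> \<le> p * \<bar>\<bar>u x - t\<bar> - \<bar>u x - s\<bar>\<bar>"
        using u0[of x] u1[of x] that p by (intro powr_lip01) auto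
      also have "\<dots> \<le> p * \<bar>t - s\<bar>" using p by (intro mult_left_mono) auto
      finally show "\<bar>u x - t\<bar> powr p \<le> \<bar>u x - s\<bar> powr p + p * \<bar>t - s\<bar>" by simp
    qed
    also have "\<dots> = G s + (LINT x:\<Omega>|lebesgue. p * \<bar>t - s\<bar>)"
      unfolding G_def by (rule set_integral_add(2)[OF int intc])
    also have "(LINT x:\<Omega>|lebesgue. p * \<bar>t - s\<bar>) = measure lebesgue \<Omega> * (p * \<bar>t - s\<bar>)"
      using set_integral_const[OF \<Omega>s \<Omega>f, of "p * \<bar>t - s\<bar>"] by (simp only: real_scaleR_def)
    finally show ?thesis .
  qed
  have "(measure lebesgue \<Omega> * p)-lipschitz_on {0..1} G"
  proof (rule lipschitz_onI)
    fix t s assume ts: "t \<in> {0..1::real}" "s \<in> {0..1::real}"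
    show "dist (G t) (G s) \<le> measure lebesgue \<Omega> * p * dist t s"
      using lip1[OF ts] lip1[OF ts(2,1)] by (auto simp: dist_real_def abs_minus_commute)
  next
    show "0 \<le> measure lebesgue \<Omega> * p" using p by simp
  qed
  then have cont: "continuous_on {0..1} G" by (rule lipschitz_on_continuous_on)
  obtain t0 where t0: "t0 \<in> {0..1}" "\<And>s. s \<in> {0..1} \<Longrightarrow> G t0 \<le> G s"
    using continuous_attains_inf[OF compact_Icc _ cont] by auto
  have glob: "G t0 \<le> G s" for s
  proof -
    consider "s < 0" | "s \<in> {0..1}" | "1 < s" by fastforce
    then show ?thesis
    proof cases
      case 1
      have "G 0 \<le> G s" unfolding G_def
        by (rule set_integral_mono[OF int int]) (use u0 1 p in \<open>auto intro!: powr_mono2\<close>)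
      then show ?thesis using t0(2)[of 0] by simp
    next
      case 3
      have "G 1 \<le> G s" unfolding G_def
        by (rule set_integral_mono[OF int int]) (use u1 3 p in \<open>auto intro!: powr_mono2\<close>)
      then show ?thesis using t0(2)[of 1] by simp
    qed (use t0 in auto)
  qed
  have uniq: "t = t0" if tmin: "\<forall>s. G t \<le> G s" for t
  proof (rule ccontr)
    assume ne: "t \<noteq> t0"
    define m where "m = (t + t0) / 2"
    define h where "h x = \<bar>u x - t\<bar> powr p + \<bar>u x - t0\<bar> powr p - 2 * \<bar>u x - m\<bar> powr p" for x
    have hint: "set_integrable lebesgue \<Omega> h"
      unfolding h_def[abs_def] using int by (intro set_integral_diff(1) set_integral_add(1) set_integrable_mult_right) auto
    have "0 < (LINT x:\<Omega>|lebesgue. h x)"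
    proof (rule set_integral_pos[OF \<Omega>s \<Omega>pos hint])
      fix x
      have lt: "\<bar>((u x - t) + (u x - t0)) / 2\<bar> powr p < (\<bar>u x - t\<bar> powr p + \<bar>u x - t0\<bar> powr p) / 2"
        using ne p by (intro powr_strict_mid) auto
      have eq: "((u x - t) + (u x - t0)) / 2 = u x - m" by (simp add: m_def field_simps)
      from lt[unfolded eq] show "0 < h x" by (simp add: h_def)
    qed
    also have "(LINT x:\<Omega>|lebesgue. h x) = G t + G t0 - 2 * G m"
      unfolding h_def G_def
      using int by (simp add: set_integral_diff(2) set_integral_add(2) set_integrable_mult_right)
    finally show False using tmin glob[of m] by (smt (verit))
  qed
  have ex1: "\<exists>!t. \<forall>s. G t \<le> G s"
    using glob uniq by blast
  have mp: "m_p p \<Omega> u = t0"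
    unfolding m_p_def using the1_equality[OF ex1, of t0] glob by (simp add: G_def)
  show "m_p p \<Omega> u \<in> {0..1}" using mp t0 by simp
  show "(LINT x:\<Omega>|lebesgue. \<bar>u x - m_p p \<Omega> u\<bar> powr p) \<le> (LINT x:\<Omega>|lebesgue. \<bar>u x - s\<bar> powr p)" for s
    using glob[of s] mp by (simp add: G_def)
qed

lemma cont_meas_lebesgue:
  fixes u :: "'a::euclidean_space \<Rightarrow> real"
  assumes "continuous_on UNIV u" shows "u \<in> borel_measurable lebesgue"
  using continuous_imp_measurable_on_sets_lebesgue[OF assms, of] lebesgue_on_UNIV_eq by auto

lemma powr_le1: "0 \<le> (a::real) \<Longrightarrow> a \<le> 1 \<Longrightarrow> 0 \<le> p \<Longrightarrow> a powr p \<le> 1"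
  using powr_mono2[of p a 1] by simp

lemma G_cmp:
  fixes \<Omega> :: "'a::euclidean_space set" and u v :: "'a \<Rightarrow> real" and p t :: real
  assumes \<Omega>m: "\<Omega> \<in> lmeasurable" and p: "1 < p"
    and um: "u \<in> borel_measurable lebesgue" and u0: "\<And>x. 0 \<le> u x" and u1: "\<And>x. u x \<le> 1"
    and vm: "v \<in> borel_measurable lebesgue" and v0: "\<And>x. 0 \<le> v x" and v1: "\<And>x. v x \<le> 1"
    and t: "t \<in> {0..1}"
  shows "(LINT x:\<Omega>|lebesgue. \<bar>u x - t\<bar> powr p)
     \<le> (LINT x:\<Omega>|lebesgue. \<bar>v x - t\<bar> powr p) + p * (LINT x:\<Omega>|lebesgue. \<bar>u x - v x\<bar>)"
proof -
  have bu: "\<bar>u x - t\<bar> \<le> 1" "\<bar>v x - t\<bar> \<le> 1" "\<bar>u x - v x\<bar> \<le> 1" for x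
    using u0[of x] u1[of x] v0[of x] v1[of x] t by auto
  have iu: "set_integrable lebesgue \<Omega> (\<lambda>x. \<bar>u x - t\<bar> powr p)"
    by (rule set_integrable_bdd[OF \<Omega>m, of _ 1]) (use um bu p in \<open>measurable, auto intro!: powr_le1\<close>)
  have iv: "set_integrable lebesgue \<Omega> (\<lambda>x. \<bar>v x - t\<bar> powr p)"
    by (rule set_integrable_bdd[OF \<Omega>m, of _ 1]) (use vm bu p in \<open>measurable, auto intro!: powr_le1\<close>)
  have iuv: "set_integrable lebesgue \<Omega> (\<lambda>x. \<bar>u x - v x\<bar>)"
    by (rule set_integrable_bdd[OF \<Omega>m, of _ 1]) (use um vm bu in \<open>measurable, auto\<close>)
  have "(LINT x:\<Omega>|lebesgue. \<bar>u x - t\<bar> powr p)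
     \<le> (LINT x:\<Omega>|lebesgue. \<bar>v x - t\<bar> powr p + p * \<bar>u x - v x\<bar>)"
  proof (rule set_integral_mono[OF iu set_integral_add(1)[OF iv set_integrable_mult_right[OF iuv]]])
    fix x
    have "\<bar>\<bar>u x - t\<bar> powr p - \<bar>v x - t\<bar> powr p\<bar> \<le> p * \<bar>\<bar>u x - t\<bar> - \<bar>v x - t\<bar>\<bar>"
      using u0[of x] u1[of x] v0[of x] v1[of x] t p by (intro powr_lip01) auto
    also have "\<dots> \<le> p * \<bar>u x - v x\<bar>" using p by (intro mult_left_mono) auto
    finally show "\<bar>u x - t\<bar> powr p \<le> \<bar>v x - t\<bar> powr p + p * \<bar>u x - v x\<bar>" by simp
  qed
  also have "\<dots> = (LINT x:\<Omega>|lebesgue. \<bar>v x - t\<bar> powr p) + (LINT x:\<Omega>|lebesgue. p * \<bar>u x - v x\<bar>)"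
    by (rule set_integral_add(2)[OF iv set_integrable_mult_right[OF iuv]])
  finally show ?thesis by simp
qed

lemma L_conv:
  fixes \<Omega> :: "'a::euclidean_space set" and un :: "nat \<Rightarrow> 'a \<Rightarrow> real" and v :: "'a \<Rightarrow> real"
  assumes \<Omega>m: "\<Omega> \<in> lmeasurable" and \<Omega>pos: "0 < measure lebesgue \<Omega>" and p: "1 < p"
    and um: "\<And>n. un n \<in> borel_measurable lebesgue" and u0: "\<And>n x. 0 \<le> un n x" and u1: "\<And>n x. un n x \<le> 1"
    and vm: "v \<in> borel_measurable lebesgue" and v0: "\<And>x. 0 \<le> v x" and v1: "\<And>x. v x \<le> 1"
    and lim: "\<And>x. (\<lambda>n. un n x) \<longlonglongrightarrow> v x"
  shows "(\<lambda>n. LINT x:\<Omega>|lebesgue. \<bar>un n x - m_p p \<Omega> (un n)\<bar> powr p)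
    \<longlonglongrightarrow> (LINT x:\<Omega>|lebesgue. \<bar>v x - m_p p \<Omega> v\<bar> powr p)"
proof -
  define E where "E n = (LINT x:\<Omega>|lebesgue. \<bar>un n x - v x\<bar>)" for n
  define Lv where "Lv = (LINT x:\<Omega>|lebesgue. \<bar>v x - m_p p \<Omega> v\<bar> powr p)"
  define L where "L n = (LINT x:\<Omega>|lebesgue. \<bar>un n x - m_p p \<Omega> (un n)\<bar> powr p)" for n
  have E0': "(\<lambda>n. LINT x:\<Omega>|lebesgue. \<bar>un n x - v x\<bar>) \<longlonglongrightarrow> (LINT x:\<Omega>|lebesgue. 0)"
    unfolding set_lebesgue_integral_def
  proof (rule integral_dominated_convergence[where w="indicator \<Omega>"])
    show "(\<lambda>x. indicator \<Omega> x *\<^sub>R (0::real)) \<in> borel_measurable lebesgue" by simp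
    show "(\<lambda>x. indicator \<Omega> x *\<^sub>R \<bar>un n x - v x\<bar>) \<in> borel_measurable lebesgue" for n
      using \<Omega>m um vm by measurable
    show "integrable lebesgue (indicator \<Omega> :: 'a \<Rightarrow> real)"
      using \<Omega>m fmeasurableD fmeasurableD2[OF \<Omega>m] by (intro integrable_real_indicator) (auto simp: top.not_eq_extremum)
    show "AE x in lebesgue. (\<lambda>n. indicator \<Omega> x *\<^sub>R \<bar>un n x - v x\<bar>) \<longlonglongrightarrow> indicator \<Omega> x *\<^sub>R 0"
    proof (intro AE_I2)
      fix x
      have "(\<lambda>n. indicator \<Omega> x *\<^sub>R \<bar>un n x - v x\<bar>) \<longlonglongrightarrow> indicator \<Omega> x *\<^sub>R \<bar>v x - v x\<bar>"
        by (intro tendsto_intros lim)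
      then show "(\<lambda>n. indicator \<Omega> x *\<^sub>R \<bar>un n x - v x\<bar>) \<longlonglongrightarrow> indicator \<Omega> x *\<^sub>R 0" by simp
    qed
    show "AE x in lebesgue. norm (indicator \<Omega> x *\<^sub>R \<bar>un n x - v x\<bar>) \<le> indicator \<Omega> x" for n
    proof (intro AE_I2)
      fix x
      have "\<bar>un n x - v x\<bar> \<le> 1" using u0[of n x] u1[of n x] v0[of x] v1[of x] by auto
      then show "norm (indicator \<Omega> x *\<^sub>R \<bar>un n x - v x\<bar>) \<le> indicator \<Omega> x"
        by (auto simp: indicator_def)
    qed
  qed
  have Eeq: "E = (\<lambda>n. LINT x:\<Omega>|lebesgue. \<bar>un n x - v x\<bar>)" by (simp add: E_def fun_eq_iff)
  have z: "(LINT x:\<Omega>|lebesgue. (0::real)) = 0" by (simp add: set_lebesgue_integral_def)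
  have E0: "E \<longlonglongrightarrow> 0"
    using E0' unfolding Eeq z .
  have mpu: "m_p p \<Omega> (un n) \<in> {0..1}" for n using mp_prop(1)[OF \<Omega>m \<Omega>pos p um u0 u1] .
  have mpv: "m_p p \<Omega> v \<in> {0..1}" using mp_prop(1)[OF \<Omega>m \<Omega>pos p vm v0 v1] .
  have up: "L n \<le> Lv + p * E n" for n
  proof -
    have "L n \<le> (LINT x:\<Omega>|lebesgue. \<bar>un n x - m_p p \<Omega> v\<bar> powr p)"
      unfolding L_def by (rule mp_prop(2)[OF \<Omega>m \<Omega>pos p um u0 u1])
    also have "\<dots> \<le> Lv + p * E n"
      unfolding Lv_def E_def by (rule G_cmp[OF \<Omega>m p um u0 u1 vm v0 v1 mpv])
    finally show ?thesis .
  qed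
  have lo: "Lv - p * E n \<le> L n" for n
  proof -
    have "Lv \<le> (LINT x:\<Omega>|lebesgue. \<bar>v x - m_p p \<Omega> (un n)\<bar> powr p)"
      unfolding Lv_def by (rule mp_prop(2)[OF \<Omega>m \<Omega>pos p vm v0 v1])
    also have "\<dots> \<le> L n + p * (LINT x:\<Omega>|lebesgue. \<bar>v x - un n x\<bar>)"
      unfolding L_def by (rule G_cmp[OF \<Omega>m p vm v0 v1 um u0 u1 mpu])
    also have "(LINT x:\<Omega>|lebesgue. \<bar>v x - un n x\<bar>) = E n"
      unfolding E_def by (simp add: abs_minus_commute)
    finally show ?thesis by simp
  qed
  have t1: "(\<lambda>n. Lv - p * E n) \<longlonglongrightarrow> Lv" using tendsto_diff[OF tendsto_const tendsto_mult[OF tendsto_const E0]] by simp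
  have t2: "(\<lambda>n. Lv + p * E n) \<longlonglongrightarrow> Lv" using tendsto_add[OF tendsto_const tendsto_mult[OF tendsto_const E0]] by simp
  have "L \<longlonglongrightarrow> Lv"
    by (rule tendsto_sandwich[OF _ _ t1 t2]) (use up lo in auto)
  then show ?thesis unfolding L_def Lv_def .
qed

lemma R_conv:
  fixes M :: "'b measure" and w :: "nat \<Rightarrow> 'b \<Rightarrow> real"
  assumes "finite_measure M" "S \<in> sets M" "\<And>n. w n \<in> borel_measurable M"
    "\<And>n z. \<bar>w n z\<bar> \<le> B" "\<And>z. (\<lambda>n. w n z) \<longlonglongrightarrow> W z"
  shows "(\<lambda>n. LINT z:S|M. w n z) \<longlonglongrightarrow> (LINT z:S|M. W z)"
  unfolding set_lebesgue_integral_def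
proof (rule integral_dominated_convergence[where w="\<lambda>_. B"])
  have Wm: "W \<in> borel_measurable M"
    by (rule borel_measurable_LIMSEQ_metric[OF assms(3) assms(5)])
  show "(\<lambda>z. indicator S z *\<^sub>R W z) \<in> borel_measurable M" using Wm assms(2) by measurable
  show "(\<lambda>z. indicator S z *\<^sub>R w n z) \<in> borel_measurable M" for n using assms(2,3) by measurable
  show "integrable M (\<lambda>_. B)" using assms(1) by (simp add: finite_measure.integrable_const)
  show "AE x in M. (\<lambda>n. indicator S x *\<^sub>R w n x) \<longlonglongrightarrow> indicator S x *\<^sub>R W x"
    by (intro AE_I2 tendsto_intros assms(5))
  show "AE x in M. norm (indicator S x *\<^sub>R w n x) \<le> B" for n
    using assms(4)[of n] by (intro AE_I2) (auto simp: indicator_def intro: order_trans[OF _ assms(4)])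
qed

lemma cont_bound01:
  assumes "continuous_on UNIV (\<lambda>z. f (fst z) (snd z) :: real)"
  obtains B where "\<And>a b. a \<in> {0..1::real} \<Longrightarrow> b \<in> {0..1::real} \<Longrightarrow> \<bar>f a b\<bar> \<le> B"
proof -
  have "compact ((\<lambda>z. f (fst z) (snd z)) ` ({0..1::real} \<times> {0..1::real}))"
    by (rule compact_continuous_image[OF continuous_on_subset[OF assms]]) (auto intro: compact_Times)
  then obtain B where "\<forall>y\<in>(\<lambda>z. f (fst z) (snd z)) ` ({0..1::real} \<times> {0..1::real}). norm y \<le> B"
    using compact_imp_bounded bounded_iff by metis
  then show ?thesis using that by force
qed

theorem proposition3p5:
  fixes \<Omega> :: "'a::euclidean_space set" and p :: real
    and f :: "real \<Rightarrow> real \<Rightarrow> real" and g :: "real \<Rightarrow> real"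
    and \<mu> :: "('a \<times> 'a) measure" and \<nu> :: "'a measure"
  assumes "open \<Omega>" "connected \<Omega>" "bounded \<Omega>"
    and "1 < p"
    and "continuous_on UNIV (\<lambda>z. f (fst z) (snd z))"
    and "continuous_on UNIV g"
    and "sets \<mu> = sets borel" "finite_measure \<mu>" "emeasure \<mu> (- (\<Omega> \<times> \<Omega>)) = 0"
    and "sets \<nu> = sets borel" "finite_measure \<nu>" "emeasure \<nu> (- \<Omega>) = 0"
    and "\<And>u. u \<in> Cc_inf \<Omega> \<Longrightarrow>
      (LINT x:\<Omega>|lebesgue. \<bar>u x - m_p p \<Omega> u\<bar> powr p)
      = (LINT z:\<Omega>\<times>\<Omega>|\<mu>. f (u (fst z)) (u (snd z))) + (LINT x:\<Omega>|\<nu>. g (u x))"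
    and "open A" "A \<subseteq> \<Omega>"
  shows "(LINT x:\<Omega>|lebesgue. \<bar>indicator A x - m_p p \<Omega> (indicator A)\<bar> powr p)
      = (LINT z:\<Omega>\<times>\<Omega>|\<mu>. f (indicator A (fst z)) (indicator A (snd z)))
        + (LINT x:\<Omega>|\<nu>. g (indicator A x))"
proof (cases "\<Omega> = {}")
  case True
  then show ?thesis by (simp add: set_lebesgue_integral_def)
next
  case False
  have \<Omega>m: "\<Omega> \<in> lmeasurable" by (rule lmeasurable_open[OF assms(3,1)])
  have \<Omega>pos: "0 < measure lebesgue \<Omega>"
  proof -
    obtain x where "x \<in> \<Omega>" using False by blast
    then obtain e where e: "e > 0" "ball x e \<subseteq> \<Omega>" using assms(1) open_contains_ball by blast
    have "0 < measure lborel (ball x e)" using content_ball_pos[OF e(1)] .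
    also have "measure lborel (ball x e) = measure lebesgue (ball x e)" by simp
    also have "\<dots> \<le> measure lebesgue \<Omega>"
      by (rule measure_mono_fmeasurable[OF e(2)]) (use \<Omega>m in auto)
    finally show ?thesis .
  qed
  have Am: "A \<in> lmeasurable" by (rule lmeasurable_open[OF bounded_subset[OF assms(3,15)] assms(14)])
  obtain un :: "nat \<Rightarrow> 'a \<Rightarrow> real" where un: "\<And>n. un n \<in> Cc_inf \<Omega>" "\<And>n. continuous_on UNIV (un n)"
    "\<And>n x. 0 \<le> un n x" "\<And>n x. un n x \<le> 1" "\<And>x. (\<lambda>n. un n x) \<longlonglongrightarrow> indicator A x"
    using approx_indicator[OF assms(14,15)] by blast
  have um: "un n \<in> borel_measurable lebesgue" for n by (rule cont_meas_lebesgue[OF un(2)])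
  have Aim: "(indicator A :: 'a \<Rightarrow> real) \<in> borel_measurable lebesgue"
    using Am by (intro borel_measurable_indicator) auto
  have LHS: "(\<lambda>n. LINT x:\<Omega>|lebesgue. \<bar>un n x - m_p p \<Omega> (un n)\<bar> powr p)
    \<longlonglongrightarrow> (LINT x:\<Omega>|lebesgue. \<bar>indicator A x - m_p p \<Omega> (indicator A)\<bar> powr p)"
    by (rule L_conv[OF \<Omega>m \<Omega>pos assms(4) um un(3,4) Aim _ _ un(5)]) (auto simp: indicator_def)
  obtain B1 where B1: "\<And>a b. a \<in> {0..1::real} \<Longrightarrow> b \<in> {0..1::real} \<Longrightarrow> \<bar>f a b\<bar> \<le> B1"
    using cont_bound01[OF assms(5)] by blast
  have gc2: "continuous_on UNIV (\<lambda>z::real\<times>real. g (fst z))"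
    by (rule continuous_on_compose2[OF assms(6)]) (auto intro: continuous_intros)
  obtain B2 where B2': "\<And>a b. a \<in> {0..1::real} \<Longrightarrow> b \<in> {0..1::real} \<Longrightarrow> \<bar>g a\<bar> \<le> B2"
    using cont_bound01[of "\<lambda>a b. g a", OF gc2] by blast
  have B2: "\<And>a. a \<in> {0..1::real} \<Longrightarrow> \<bar>g a\<bar> \<le> B2"
    using B2'[of _ 0] by simp
  have fcont: "isCont (\<lambda>z. f (fst z) (snd z)) q" for q
    using assms(5) continuous_on_eq_continuous_at open_UNIV by blast
  have gcont: "isCont g q" for q
    using assms(6) continuous_on_eq_continuous_at open_UNIV by blast
  have R1: "(\<lambda>n. LINT z:\<Omega>\<times>\<Omega>|\<mu>. f (un n (fst z)) (un n (snd z)))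
    \<longlonglongrightarrow> (LINT z:\<Omega>\<times>\<Omega>|\<mu>. f (indicator A (fst z)) (indicator A (snd z)))"
  proof (rule R_conv[OF assms(8)])
    show "\<Omega> \<times> \<Omega> \<in> sets \<mu>" using assms(7) assms(1) by (simp add: borel_open open_Times)
    show "(\<lambda>z. f (un n (fst z)) (un n (snd z))) \<in> borel_measurable \<mu>" for n
    proof -
      have "continuous_on UNIV (\<lambda>z. (\<lambda>q. f (fst q) (snd q)) (un n (fst z), un n (snd z)))"
        by (rule continuous_on_compose2[OF assms(5)])
          (auto intro!: continuous_intros continuous_on_compose2[OF un(2)])
      then have "(\<lambda>z. f (un n (fst z)) (un n (snd z))) \<in> borel_measurable borel"
        by (simp add: borel_measurable_continuous_onI)
      then show ?thesis by (rule measurable_cong_sets[OF assms(7) refl, THEN equalityD2, THEN subsetD])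
    qed
    show "\<bar>f (un n (fst z)) (un n (snd z))\<bar> \<le> B1" for n z
      using un(3,4) by (intro B1) auto
    show "(\<lambda>n. f (un n (fst z)) (un n (snd z))) \<longlonglongrightarrow> f (indicator A (fst z)) (indicator A (snd z))" for z
      using isCont_tendsto_compose[OF fcont tendsto_Pair[OF un(5) un(5)]] by simp
  qed
  have R2: "(\<lambda>n. LINT x:\<Omega>|\<nu>. g (un n x)) \<longlonglongrightarrow> (LINT x:\<Omega>|\<nu>. g (indicator A x))"
  proof (rule R_conv[OF assms(11)])
    show "\<Omega> \<in> sets \<nu>" using assms(10) assms(1) by (simp add: borel_open)
    show "(\<lambda>x. g (un n x)) \<in> borel_measurable \<nu>" for n
    proof -
      have "continuous_on UNIV (\<lambda>x. g (un n x))"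
        by (rule continuous_on_compose2[OF assms(6) un(2)]) auto
      then have "(\<lambda>x. g (un n x)) \<in> borel_measurable borel"
        by (simp add: borel_measurable_continuous_onI)
      then show ?thesis by (rule measurable_cong_sets[OF assms(10) refl, THEN equalityD2, THEN subsetD])
    qed
    show "\<bar>g (un n x)\<bar> \<le> B2" for n x
      using un(3,4) by (intro B2) auto
    show "(\<lambda>n. g (un n x)) \<longlonglongrightarrow> g (indicator A x)" for x
      using isCont_tendsto_compose[OF gcont un(5)] .
  qed
  have eq: "(LINT x:\<Omega>|lebesgue. \<bar>un n x - m_p p \<Omega> (un n)\<bar> powr p)
      = (LINT z:\<Omega>\<times>\<Omega>|\<mu>. f (un n (fst z)) (un n (snd z))) + (LINT x:\<Omega>|\<nu>. g (un n x))" for n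
    using assms(13)[OF un(1)] .
  have "(\<lambda>n. LINT x:\<Omega>|lebesgue. \<bar>un n x - m_p p \<Omega> (un n)\<bar> powr p)
    \<longlonglongrightarrow> (LINT z:\<Omega>\<times>\<Omega>|\<mu>. f (indicator A (fst z)) (indicator A (snd z))) + (LINT x:\<Omega>|\<nu>. g (indicator A x))"
    unfolding eq by (rule tendsto_add[OF R1 R2])
  then show ?thesis using LHS LIMSEQ_unique by blast
qed
end
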